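(* For every $m\in\mathbb N$ there exist $L_3(m)\in\mathbb N$ and $K_3(m)\in\mathbb N$ such that whenever $\varepsilon_1,\dots,\varepsilon_m\in\{\pm1\}$ and $i_1,\dots,i_m>K_3(m)$ are integers, then either $$\varepsilon_1a_{i_1}+\dots+\varepsilon_ma_{i_m}=\varepsilon_1\eta^{i_1}+\dots+\varepsilon_m\eta^{i_m}=0,$$ or $$|\varepsilon_1a_{i_1}+\dots+\varepsilon_ma_{i_m}|\ge\eta^{\min\{i_1,\dots,i_m\}-L_3(m)}.$$ Moreover, $L_3(m)$ and $K_3(m)$ can be chosen to be increasing in $m$.
   Context: Standing setting: $d\in\mathbb N$; $\lambda_1,\dots,\lambda_d\in\mathbb C$ are the roots of an irreducible polynomial of degree $d$ with integer coefficients; $c_1,\dots,c_d\in\mathbb C$; the dominant root condition holds: $\lambda_1$ is real, $\lambda_1>1$, $\lambda_1>\max\{|\lambda_2|,\dots,|\lambda_d|\}$, $c_1\ne0$; $a_n=c_1\lambda_1^n+\dots+c_d\lambda_d^n$ is a positive integer for every $n\in\mathbb N$; and $\eta:=\lambda_1$. *)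

theory Defs
  imports Complex_Main "HOL-Computational_Algebra.Computational_Algebra"
begin

definition lrs :: "nat \<Rightarrow> (nat \<Rightarrow> complex) \<Rightarrow> (nat \<Rightarrow> complex) \<Rightarrow> nat \<Rightarrow> complex" where
  "lrs d c lam n = (\<Sum>i=1..d. c i * lam i ^ n)"

end

theory Submission
  imports Defs
begin


lemma mpi_add: "map_poly (of_int :: int \<Rightarrow> 'a::comm_ring_1) (f + g) = map_poly of_int f + map_poly of_int g"
  by (intro poly_eqI) (simp add: coeff_map_poly)

lemma mpi_mult: "map_poly (of_int :: int \<Rightarrow> 'a::comm_ring_1) (f * g) = map_poly of_int f * map_poly of_int g"
proof (induction f rule: pCons_induct)
  case 0 then show ?case by simp
next
  case (pCons a f)
  have "map_poly (of_int :: int \<Rightarrow> 'a) (pCons a f * g) = map_poly of_int (smult a g + pCons 0 (f * g))"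
    by simp
  also have "\<dots> = smult (of_int a) (map_poly of_int g) + pCons 0 (map_poly of_int f * map_poly of_int g)"
    by (simp add: mpi_add map_poly_smult map_poly_pCons pCons.IH)
  also have "\<dots> = map_poly (of_int :: int \<Rightarrow> 'a) (pCons a f) * map_poly of_int g"
    by (simp add: map_poly_pCons)
  finally show ?case .
qed

lemma mpi_smult: "map_poly (of_int :: int \<Rightarrow> 'a::comm_ring_1) (smult a f) = smult (of_int a) (map_poly of_int f)"
  by (simp add: map_poly_smult)

lemma ev_mult: "poly (map_poly (of_int :: int \<Rightarrow> 'a::comm_ring_1) (f * g)) z = poly (map_poly of_int f) z * poly (map_poly of_int g) z"
  by (simp add: mpi_mult)
lemma ev_add: "poly (map_poly (of_int :: int \<Rightarrow> 'a::comm_ring_1) (f + g)) z = poly (map_poly of_int f) z + poly (map_poly of_int g) z"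
  by (simp add: mpi_add)
lemma ev_smult: "poly (map_poly (of_int :: int \<Rightarrow> 'a::comm_ring_1) (smult a f)) z = of_int a * poly (map_poly of_int f) z"
  by (simp add: mpi_smult)

lemma ev_sum_monom: "poly (map_poly (of_int :: int \<Rightarrow> 'a::comm_ring_1) (\<Sum>j\<in>J. monom (e j) (k j))) z = (\<Sum>j\<in>J. of_int (e j) * z ^ k j)"
proof (induction J rule: infinite_finite_induct)
  case (insert x F) then show ?case by (simp add: mpi_add map_poly_monom poly_monom)
qed auto

lemma pdiv_min:
  fixes f0 g :: "int poly" and z :: complex
  assumes f0: "f0 \<noteq> 0"
    and minf: "\<And>f. f \<noteq> 0 \<Longrightarrow> poly (map_poly of_int f) z = 0 \<Longrightarrow> degree f0 \<le> degree f"
    and f0z: "poly (map_poly of_int f0) z = 0"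
    and gz: "poly (map_poly of_int g) z = 0"
  shows "\<exists>c s. c \<noteq> 0 \<and> smult c g = f0 * s"
proof -
  obtain s r where sr: "pseudo_divmod g f0 = (s, r)" by (cases "pseudo_divmod g f0") auto
  define c where "c = coeff f0 (degree f0) ^ (Suc (degree g) - degree f0)"
  have eq: "smult c g = f0 * s + r" and rr: "r = 0 \<or> degree r < degree f0"
    using pseudo_divmod[OF f0 sr] by (auto simp: c_def)
  have c0: "c \<noteq> 0" using f0 by (simp add: c_def)
  have "poly (map_poly of_int (smult c g)) z = poly (map_poly of_int (f0 * s + r)) z"
    using eq by simp
  hence "poly (map_poly (of_int :: int \<Rightarrow> complex) r) z = 0"
    using f0z gz by (simp add: ev_smult ev_add ev_mult)
  hence "r = 0" using rr minf by force
  thus ?thesis using eq c0 by auto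
qed

lemma alg_root:
  fixes p q :: "int poly" and z w :: complex
  assumes irr: "irreducible p" and pz: "poly (map_poly of_int p) z = 0"
    and qz: "poly (map_poly of_int q) z = 0" and pw: "poly (map_poly of_int p) w = 0"
  shows "poly (map_poly of_int q) w = 0"
proof -
  have p0: "p \<noteq> 0" using irr by auto
  define P where "P = (\<lambda>k. \<exists>f::int poly. f \<noteq> 0 \<and> poly (map_poly of_int f) z = 0 \<and> degree f = k)"
  have "P (degree p)" using p0 pz P_def by blast
  define k0 where "k0 = (LEAST k. P k)"
  have "P k0" unfolding k0_def by (rule LeastI) fact
  then obtain f0 where f0: "f0 \<noteq> 0" "poly (map_poly of_int f0) z = 0" "degree f0 = k0"
    unfolding P_def by blast
  have minf: "degree f0 \<le> degree f" if "f \<noteq> 0" "poly (map_poly of_int f) z = 0" for f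
  proof -
    have "P (degree f)" using that P_def by blast
    thus ?thesis using f0(3) unfolding k0_def by (simp add: Least_le)
  qed
  have pe: "prime_elem p" using irr by (simp add: irreducible_imp_prime_elem)
  obtain c s where cs: "c \<noteq> 0" "smult c p = f0 * s"
    using pdiv_min[OF f0(1) minf f0(2) pz] by blast
  have "p dvd f0 * s" using cs(2)[symmetric] by (metis dvd_smult dvd_refl)
  hence "p dvd f0 \<or> p dvd s" using pe prime_elem_dvd_mult_iff by blast
  moreover have "\<not> p dvd s"
  proof
    assume "p dvd s"
    then obtain t where t: "s = p * t" by (auto elim: dvdE)
    have "p * [:c:] = p * (f0 * t)" using cs(2) t by (simp add: ac_simps)
    hence "[:c:] = f0 * t" by (rule mult_left_cancel[OF p0, THEN iffD1])
    hence "degree f0 = 0" using f0(1) cs(1)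
      by (metis add_eq_0_iff_both_eq_0 degree_mult_eq degree_pCons_0 mult_zero_right pCons_eq_0_iff)
    then obtain a where "f0 = [:a:]" by (metis degree_eq_zeroE)
    thus False using f0 by (simp add: map_poly_pCons)
  qed
  ultimately have "p dvd f0" by blast
  hence "degree p \<le> degree f0" using f0(1) by (simp add: dvd_imp_degree_le)
  hence minp: "degree p \<le> degree f" if "f \<noteq> 0" "poly (map_poly of_int f) z = 0" for f
    using minf[OF that] by linarith
  obtain c2 s2 where cs2: "c2 \<noteq> 0" "smult c2 q = p * s2"
    using pdiv_min[OF p0 minp pz qz] by blast
  have "poly (map_poly (of_int :: int \<Rightarrow> complex) (smult c2 q)) w = poly (map_poly of_int (p * s2)) w"
    using cs2 by simp
  hence "of_int c2 * poly (map_poly of_int q) w = (0::complex)"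
    by (simp add: ev_smult ev_mult pw)
  thus ?thesis using cs2(1) by simp
qed



lemma powr_nat_diff: "(x::real) > 0 \<Longrightarrow> x powr (real a - real b) = x ^ a / x ^ b"
  by (simp add: powr_diff powr_realpow)

locale lr =
  fixes d :: nat and p :: "int poly" and lam c :: "nat \<Rightarrow> complex"
  assumes irred: "irreducible p"
    and roots: "map_poly of_int p = smult (of_int (lead_coeff p)) (\<Prod>i=1..d. [:- lam i, 1:])"
    and real1: "Im (lam 1) = 0" and gt1: "Re (lam 1) > 1"
    and dom: "\<forall>i\<in>{2..d}. cmod (lam i) < Re (lam 1)" and c1: "c 1 \<noteq> 0"
    and posint: "\<forall>n\<ge>1. \<exists>k::int. k > 0 \<and> lrs d c lam n = of_int k"
begin

definition "eta = Re (lam 1)"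
definition "A n = Re (lrs d c lam n)"
definition "SS J eps ix = (\<Sum>j\<in>J. of_int (eps j) * A (ix j))"
definition "TT J eps ix = (\<Sum>j\<in>J. of_int (eps j) * eta ^ ix j)"
definition "C1 = (\<Sum>i=1..d. cmod (c i))"

lemma eta_gt1: "eta > 1" using gt1 by (simp add: eta_def)

lemma lam1: "lam 1 = complex_of_real eta"
  using real1 by (simp add: eta_def complex_eq_iff)

lemma lam1s: "lam (Suc 0) = complex_of_real eta"
  using lam1 by simp

lemma c1s: "c (Suc 0) \<noteq> 0" using c1 by simp

lemma d_pos: "d \<ge> 1"
proof (rule ccontr)
  assume "\<not> d \<ge> 1"
  hence "d = 0" by simp
  moreover obtain k :: int where "k > 0" "lrs d c lam 1 = of_int k" using posint by auto
  ultimately show False by (simp add: lrs_def)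
qed

lemma lrs_real: "n \<ge> 1 \<Longrightarrow> lrs d c lam n = of_real (A n)"
proof -
  assume "n \<ge> 1"
  then obtain k :: int where "lrs d c lam n = of_int k" using posint by auto
  thus ?thesis by (simp add: A_def)
qed

lemma roots_all: "i \<in> {1..d} \<Longrightarrow> poly (map_poly of_int p) (lam i) = 0"
  by (subst roots) (auto simp: poly_prod prod_zero_iff)

lemma SS_complex: "(\<forall>j\<in>J. ix j \<ge> 1) \<Longrightarrow>
   of_real (SS J eps ix) = (\<Sum>j\<in>J. of_int (eps j) * lrs d c lam (ix j))"
  by (simp add: SS_def lrs_real)

lemma alg:
  assumes "finite J" "\<forall>j\<in>J. ix j \<ge> 1" "TT J eps ix = 0"
  shows "SS J eps ix = 0"
proof -
  define q where "q = (\<Sum>j\<in>J. monom (eps j) (ix j))"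
  have ev: "poly (map_poly of_int q) z = (\<Sum>j\<in>J. of_int (eps j) * z ^ ix j)" for z :: complex
    unfolding q_def by (rule ev_sum_monom)
  have "poly (map_poly of_int q) (lam 1) = of_real (TT J eps ix)"
    by (simp add: ev TT_def lam1 lam1s)
  hence q1: "poly (map_poly of_int q) (lam 1) = 0" using assms by simp
  have "1 \<in> {1..d}" using d_pos by simp
  have z: "(\<Sum>j\<in>J. of_int (eps j) * lam i ^ ix j) = 0" if "i \<in> {1..d}" for i
    using alg_root[OF irred roots_all[OF \<open>1 \<in> {1..d}\<close>] q1 roots_all[OF that]] by (simp add: ev)
  have "complex_of_real (SS J eps ix) = (\<Sum>j\<in>J. of_int (eps j) * lrs d c lam (ix j))"
    using assms SS_complex by simp
  also have "\<dots> = (\<Sum>i=1..d. c i * (\<Sum>j\<in>J. of_int (eps j) * lam i ^ ix j))"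
    by (simp add: lrs_def sum_distrib_left sum.swap[of _ J] algebra_simps)
  also have "\<dots> = 0" using z by simp
  finally show ?thesis by simp
qed

lemma lam_le: "i \<in> {1..d} \<Longrightarrow> cmod (lam i) \<le> eta"
proof -
  assume i: "i \<in> {1..d}"
  show ?thesis
  proof (cases "i = 1")
    case True thus ?thesis using eta_gt1 by (simp add: lam1 lam1s)
  next
    case False thus ?thesis using i dom by (auto simp: eta_def intro: less_imp_le)
  qed
qed

lemma C1_pos: "C1 > 0"
proof -
  have "cmod (c 1) \<le> C1" unfolding C1_def
    by (rule member_le_sum) (use d_pos in auto)
  thus ?thesis using c1 c1s by (smt (verit) zero_less_norm_iff)
qed

lemma A_bound: "n \<ge> 1 \<Longrightarrow> \<bar>A n\<bar> \<le> C1 * eta ^ n"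
proof -
  assume n: "n \<ge> 1"
  have "\<bar>A n\<bar> = cmod (lrs d c lam n)" using lrs_real[OF n] by simp
  also have "\<dots> \<le> (\<Sum>i=1..d. cmod (c i * lam i ^ n))" unfolding lrs_def by (rule norm_sum)
  also have "\<dots> \<le> (\<Sum>i=1..d. cmod (c i) * eta ^ n)"
    by (rule sum_mono) (auto simp: norm_mult norm_power intro!: mult_left_mono power_mono lam_le)
  also have "\<dots> = C1 * eta ^ n" by (simp add: C1_def sum_distrib_right)
  finally show ?thesis .
qed

lemma SS_bound:
  assumes "finite J" "\<forall>j\<in>J. eps j \<in> {-1,1} \<and> 1 \<le> ix j \<and> ix j \<le> N"
  shows "\<bar>SS J eps ix\<bar> \<le> card J * C1 * eta ^ N"
proof -
  have "\<bar>SS J eps ix\<bar> \<le> (\<Sum>j\<in>J. \<bar>of_int (eps j) * A (ix j)\<bar>)" unfolding SS_def by (rule sum_abs)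
  also have "\<dots> \<le> (\<Sum>j\<in>J. C1 * eta ^ N)"
  proof (rule sum_mono)
    fix j assume j: "j \<in> J"
    have "\<bar>of_int (eps j) * A (ix j)\<bar> = \<bar>A (ix j)\<bar>" using assms j by (auto simp: abs_mult)
    also have "\<dots> \<le> C1 * eta ^ ix j" using A_bound assms j by auto
    also have "\<dots> \<le> C1 * eta ^ N" using C1_pos eta_gt1 assms j
      by (intro mult_left_mono power_increasing) auto
    finally show "\<bar>of_int (eps j) * A (ix j)\<bar> \<le> C1 * eta ^ N" .
  qed
  also have "\<dots> = card J * C1 * eta ^ N" by simp
  finally show ?thesis .
qed

lemma theta_ex: "\<exists>th. 1 \<le> th \<and> th < eta \<and> (\<forall>i\<in>{2..d}. cmod (lam i) \<le> th)"
proof -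
  define th where "th = Max (insert 1 ((\<lambda>i. cmod (lam i)) ` {2..d}))"
  have "1 \<le> th" by (simp add: th_def)
  moreover have "th < eta" using eta_gt1 dom by (simp add: th_def eta_def)
  moreover have "\<forall>i\<in>{2..d}. cmod (lam i) \<le> th" unfolding th_def
    by (intro ballI Max_ge) auto
  ultimately show ?thesis by blast
qed

end

context lr begin

lemma TT_repr:
  assumes fin: "finite J" and ge: "\<forall>j\<in>J. n \<le> ix j \<and> ix j \<le> n + B"
  shows "TT J eps ix = eta ^ n * (\<Sum>k\<le>B. of_int (\<Sum>j\<in>{j\<in>J. ix j - n = k}. eps j) * eta ^ k)"
proof -
  have "TT J eps ix = (\<Sum>j\<in>J. eta ^ n * (of_int (eps j) * eta ^ (ix j - n)))"
    unfolding TT_def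
  proof (rule sum.cong)
    fix j assume "j \<in> J"
    hence "ix j = n + (ix j - n)" using ge by auto
    hence "eta ^ ix j = eta ^ n * eta ^ (ix j - n)" by (metis power_add)
    thus "of_int (eps j) * eta ^ ix j = eta ^ n * (of_int (eps j) * eta ^ (ix j - n))" by simp
  qed simp
  also have "\<dots> = eta ^ n * (\<Sum>j\<in>J. of_int (eps j) * eta ^ (ix j - n))"
    by (simp add: sum_distrib_left)
  also have "(\<Sum>j\<in>J. of_int (eps j) * eta ^ (ix j - n)) =
      (\<Sum>k\<le>B. \<Sum>j\<in>{j\<in>J. ix j - n = k}. of_int (eps j) * eta ^ (ix j - n))"
    by (rule sum.group[symmetric]) (use fin ge in auto)
  also have "\<dots> = (\<Sum>k\<le>B. of_int (\<Sum>j\<in>{j\<in>J. ix j - n = k}. eps j) * eta ^ k)"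
    by (rule sum.cong) (auto simp: sum_distrib_right)
  finally show ?thesis .
qed

lemma window:
  "\<exists>Kw Lw. \<forall>J eps ix. finite J \<longrightarrow> J \<noteq> {} \<longrightarrow> card J \<le> M \<longrightarrow>
     (\<forall>j\<in>J. eps j \<in> {-1,1} \<and> ix j > Kw \<and> ix j \<le> Min (ix ` J) + B) \<longrightarrow>
     TT J eps ix \<noteq> 0 \<longrightarrow> eta powr (real (Min (ix ` J)) - real Lw) \<le> \<bar>SS J eps ix\<bar>"
proof -
  obtain th where th: "1 \<le> th" "th < eta" "\<forall>i\<in>{2..d}. cmod (lam i) \<le> th"
    using theta_ex by blast
  define V where "V = (\<lambda>cf. \<Sum>k\<le>B. of_int (cf k) * eta ^ k) ` (PiE {..B} (\<lambda>_. {-int M..int M}))"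
  have finV: "finite V" by (simp add: V_def finite_PiE)
  define del where "del = Min (insert 1 (abs ` (V - {0})))"
  have delpos: "del > 0" unfolding del_def using finV by (subst Min_gr_iff) auto
  have delle: "del \<le> \<bar>v\<bar>" if "v \<in> V" "v \<noteq> 0" for v
    unfolding del_def using finV that by (intro Min_le) auto
  define C2 where "C2 = (\<Sum>i=2..d. cmod (c i))"
  have C2: "C2 \<ge> 0" by (simp add: C2_def sum_nonneg)
  define ka where "ka = cmod (c 1) * del"
  have kapos: "ka > 0" using c1 delpos by (simp add: ka_def)
  define Y where "Y = real M * C2 * th ^ B + 1"
  have Y0: "real M * C2 * th ^ B \<ge> 0" using C2 th by simp
  have Ypos: "Y > 0" using Y0 by (simp add: Y_def)
  define X where "X = ka / (2 * Y)"
  have Xpos: "X > 0" using kapos Ypos by (simp add: X_def)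
  have r1: "th / eta < 1" "0 < th / eta" using th eta_gt1 by auto
  obtain N where N: "(th / eta) ^ N < X" using real_arch_pow_inv[OF Xpos r1(1)] by blast
  obtain Lw where Lw: "2 / ka < eta ^ Lw" using real_arch_pow[OF eta_gt1] by blast
  show ?thesis
  proof (intro exI allI impI)
    fix J eps ix
    assume fin: "finite J" and ne: "J \<noteq> {}" and card: "card J \<le> M"
      and hyp: "\<forall>j\<in>J. eps j \<in> {-1,1} \<and> ix j > N \<and> ix j \<le> Min (ix ` J) + B"
      and T0: "TT J eps ix \<noteq> 0"
    define n where "n = Min (ix ` J)"
    have nle: "\<forall>j\<in>J. n \<le> ix j" using fin n_def by auto
    have "n \<in> ix ` J" unfolding n_def using fin ne by (intro Min_in) auto
    then obtain j0 where j0: "j0 \<in> J" "ix j0 = n" by auto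
    have nN: "N \<le> n" using hyp j0 by force
    have ix1: "\<forall>j\<in>J. 1 \<le> ix j" using hyp by force
    define cf where "cf = restrict (\<lambda>k. \<Sum>j\<in>{j\<in>J. ix j - n = k}. eps j) {..B}"
    have cfb: "\<bar>\<Sum>j\<in>{j\<in>J. ix j - n = k}. eps j\<bar> \<le> int M" for k
    proof -
      have "\<bar>\<Sum>j\<in>{j\<in>J. ix j - n = k}. eps j\<bar> \<le> (\<Sum>j\<in>{j\<in>J. ix j - n = k}. \<bar>eps j\<bar>)"
        by (rule sum_abs)
      also have "\<dots> = (\<Sum>j\<in>{j\<in>J. ix j - n = k}. 1)"
        by (rule sum.cong) (use hyp in auto)
      also have "\<dots> = int (card {j\<in>J. ix j - n = k})" by simp
      also have "\<dots> \<le> int (card J)" using fin by (simp add: card_mono)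
      finally show ?thesis using card by linarith
    qed
    have cfin: "cf \<in> PiE {..B} (\<lambda>_. {-int M..int M})"
      unfolding cf_def using cfb by (auto simp: abs_le_iff) (smt (verit) cfb)
    define v where "v = (\<Sum>k\<le>B. of_int (cf k) * eta ^ k)"
    have vV: "v \<in> V" unfolding V_def v_def using cfin by blast
    have Tv: "TT J eps ix = eta ^ n * v"
    proof -
      have "TT J eps ix = eta ^ n * (\<Sum>k\<le>B. of_int (\<Sum>j\<in>{j\<in>J. ix j - n = k}. eps j) * eta ^ k)"
        by (rule TT_repr) (use fin hyp nle n_def in auto)
      thus ?thesis unfolding v_def by (simp add: cf_def)
    qed
    have v0: "v \<noteq> 0" using T0 Tv by auto
    have delv: "del \<le> \<bar>v\<bar>" using delle[OF vV v0] .
    define R where "R = (\<Sum>j\<in>J. of_int (eps j) * (\<Sum>i=2..d. c i * lam i ^ ix j))"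
    have lrs_split: "lrs d c lam k = c 1 * lam 1 ^ k + (\<Sum>i=2..d. c i * lam i ^ k)" for k
      unfolding lrs_def using d_pos by (simp add: sum.atLeast_Suc_atMost numeral_2_eq_2)
    have Sdec: "complex_of_real (SS J eps ix) = c 1 * complex_of_real (TT J eps ix) + R"
    proof -
      have "complex_of_real (SS J eps ix) = (\<Sum>j\<in>J. of_int (eps j) * lrs d c lam (ix j))"
        using SS_complex ix1 by simp
      also have "\<dots> = (\<Sum>j\<in>J. c 1 * (of_int (eps j) * lam 1 ^ ix j)) + R"
        by (simp add: lrs_split R_def algebra_simps sum.distrib)
      also have "\<dots> = c 1 * complex_of_real (TT J eps ix) + R"
        by (simp add: TT_def sum_distrib_left lam1 lam1s)
      finally show ?thesis .
    qed
    have Rb: "cmod R \<le> real M * C2 * th ^ (n + B)"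
    proof -
      have "cmod R \<le> (\<Sum>j\<in>J. cmod (of_int (eps j) * (\<Sum>i=2..d. c i * lam i ^ ix j)))"
        unfolding R_def by (rule norm_sum)
      also have "\<dots> \<le> (\<Sum>j\<in>J. C2 * th ^ (n + B))"
      proof (rule sum_mono)
        fix j assume j: "j \<in> J"
        have "cmod (of_int (eps j) * (\<Sum>i=2..d. c i * lam i ^ ix j)) = cmod (\<Sum>i=2..d. c i * lam i ^ ix j)"
          using hyp j by (auto simp: norm_mult)
        also have "\<dots> \<le> (\<Sum>i=2..d. cmod (c i * lam i ^ ix j))" by (rule norm_sum)
        also have "\<dots> \<le> (\<Sum>i=2..d. cmod (c i) * th ^ (n + B))"
        proof (rule sum_mono)
          fix i assume i: "i \<in> {2..d}"
          have "cmod (lam i) ^ ix j \<le> th ^ ix j" using th i by (intro power_mono) auto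
          also have "\<dots> \<le> th ^ (n + B)" using th hyp j n_def by (intro power_increasing) auto
          finally show "cmod (c i * lam i ^ ix j) \<le> cmod (c i) * th ^ (n + B)"
            by (simp add: norm_mult norm_power mult_left_mono)
        qed
        also have "\<dots> = C2 * th ^ (n + B)" by (simp add: C2_def sum_distrib_right)
        finally show "cmod (of_int (eps j) * (\<Sum>i=2..d. c i * lam i ^ ix j)) \<le> C2 * th ^ (n + B)" .
      qed
      also have "\<dots> = real (card J) * (C2 * th ^ (n + B))" by simp
      also have "\<dots> \<le> real M * (C2 * th ^ (n + B))"
        using card C2 th by (intro mult_right_mono) auto
      finally show ?thesis by simp
    qed
    have pw: "(th / eta) ^ n \<le> X"
    proof -
      have "(th / eta) ^ n \<le> (th / eta) ^ N" using r1 nN by (intro power_decreasing) auto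
      thus ?thesis using N by simp
    qed
    have Rb2: "real M * C2 * th ^ (n + B) \<le> ka / 2 * eta ^ n"
    proof -
      have "real M * C2 * th ^ (n + B) = (real M * C2 * th ^ B) * (th / eta) ^ n * eta ^ n"
        using eta_gt1 by (simp add: power_add power_divide field_simps)
      also have "\<dots> \<le> Y * X * eta ^ n"
        using C2 th pw eta_gt1 r1 by (intro mult_right_mono mult_mono) (auto simp: Y_def)
      also have "\<dots> = ka / 2 * eta ^ n" using Ypos by (simp add: X_def)
      finally show ?thesis .
    qed
    have main: "ka * eta ^ n \<le> cmod (c 1 * complex_of_real (TT J eps ix))"
    proof -
      have "cmod (c 1 * complex_of_real (TT J eps ix)) = cmod (c 1) * (eta ^ n * \<bar>v\<bar>)"
        using Tv eta_gt1 by (simp add: norm_mult abs_mult norm_power)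
      also have "\<dots> \<ge> cmod (c 1) * (eta ^ n * del)"
        using delv eta_gt1 by (intro mult_left_mono) auto
      finally show ?thesis by (simp add: ka_def mult_ac)
    qed
    have "\<bar>SS J eps ix\<bar> = cmod (complex_of_real (SS J eps ix))" by simp
    also have "\<dots> \<ge> cmod (c 1 * complex_of_real (TT J eps ix)) - cmod R"
      unfolding Sdec by (rule norm_diff_ineq)
    finally have "\<bar>SS J eps ix\<bar> \<ge> ka / 2 * eta ^ n" using main Rb Rb2 by linarith
    moreover have "eta powr (real n - real Lw) \<le> ka / 2 * eta ^ n"
    proof -
      have "eta powr (real n - real Lw) = eta ^ n / eta ^ Lw" using eta_gt1 by (simp add: powr_nat_diff)
      also have "\<dots> \<le> eta ^ n * (ka / 2)"
      proof -
        have "1 / eta ^ Lw \<le> ka / 2" using Lw kapos eta_gt1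
          by (simp add: field_simps)
        thus ?thesis using eta_gt1 by (simp add: divide_le_eq field_simps)
      qed
      finally show ?thesis by (simp add: mult_ac)
    qed
    ultimately show "eta powr (real (Min (ix ` J)) - real Lw) \<le> \<bar>SS J eps ix\<bar>"
      using n_def by simp
  qed
qed

end


lemma pigeon:
  fixes ix :: "nat \<Rightarrow> nat"
  assumes fin: "finite J" and card: "card J \<le> Suc m" and j0: "j0 \<in> J" "ix j0 = n"
  shows "\<exists>t\<le>m. \<forall>j\<in>J. \<not> (n + t * G < ix j \<and> ix j \<le> n + Suc t * G)"
proof (rule ccontr)
  assume "\<not> ?thesis"
  hence ex: "\<And>t. t \<le> m \<Longrightarrow> \<exists>j\<in>J. n + t * G < ix j \<and> ix j \<le> n + Suc t * G" by blast
  define F where "F t = {j\<in>J. ix j \<le> n + t * G}" for t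
  have "t \<le> Suc m \<Longrightarrow> Suc t \<le> card (F t)" for t
  proof (induction t)
    case 0
    have "j0 \<in> F 0" using j0 by (simp add: F_def)
    hence "F 0 \<noteq> {}" by blast
    moreover have "finite (F 0)" using fin by (simp add: F_def)
    ultimately show ?case by (simp add: Suc_le_eq card_gt_0_iff)
  next
    case (Suc t)
    then obtain j where j: "j \<in> J" "n + t * G < ix j" "ix j \<le> n + Suc t * G" using ex by force
    have "F t \<subset> F (Suc t)"
    proof
      show "F t \<subseteq> F (Suc t)" by (auto simp: F_def)
      have "j \<in> F (Suc t)" "j \<notin> F t" using j by (auto simp: F_def)
      thus "F t \<noteq> F (Suc t)" by blast
    qed
    hence "card (F t) < card (F (Suc t))" using fin by (intro psubset_card_mono) (auto simp: F_def)
    thus ?case using Suc by simp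
  qed
  hence "Suc (Suc m) \<le> card (F (Suc m))" by simp
  moreover have "card (F (Suc m)) \<le> card J" using fin by (intro card_mono) (auto simp: F_def)
  ultimately show False using card by simp
qed

context lr begin

definition good :: "nat \<Rightarrow> nat \<Rightarrow> nat set \<Rightarrow> (nat \<Rightarrow> int) \<Rightarrow> (nat \<Rightarrow> nat) \<Rightarrow> bool" where "good L K J eps ix \<longleftrightarrow> ((\<forall>j\<in>J. eps j \<in> {-1,1} \<and> ix j > K) \<longrightarrow>
   ((SS J eps ix = 0 \<and> TT J eps ix = 0) \<or> eta powr (real (Min (ix ` J)) - real L) \<le> \<bar>SS J eps ix\<bar>))"
definition QQ :: "nat \<Rightarrow> nat \<Rightarrow> nat \<Rightarrow> bool" where "QQ m L K \<longleftrightarrow> (\<forall>J eps ix. finite J \<longrightarrow> card J \<le> m \<longrightarrow> good L K J eps ix)"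

lemma QQ_mono: "QQ m L K \<Longrightarrow> m' \<le> m \<Longrightarrow> L \<le> L' \<Longrightarrow> K \<le> K' \<Longrightarrow> QQ m' L' K'"
proof -
  assume Q: "QQ m L K" and le: "m' \<le> m" "L \<le> L'" "K \<le> K'"
  have pw: "eta powr (x - real L') \<le> eta powr (x - real L)" for x
    using eta_gt1 le by (intro powr_mono) auto
  show ?thesis unfolding QQ_def
  proof (intro allI impI)
    fix J :: "nat set" and eps :: "nat \<Rightarrow> int" and ix :: "nat \<Rightarrow> nat"
    assume "finite J" "card J \<le> m'"
    hence "good L K J eps ix" using Q le unfolding QQ_def by auto
    thus "good L' K' J eps ix" unfolding good_def using le pw[of "real (Min (ix ` J))"]
      by force
  qed
qed

lemma QQ0: "QQ 0 0 0"
  unfolding QQ_def good_def by (auto simp: SS_def TT_def)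

lemma SS_split: "finite J \<Longrightarrow> SS J eps ix = SS (J \<inter> X) eps ix + SS (J - X) eps ix"
  unfolding SS_def by (rule sum.Int_Diff)
lemma TT_split: "finite J \<Longrightarrow> TT J eps ix = TT (J \<inter> X) eps ix + TT (J - X) eps ix"
  unfolding TT_def by (rule sum.Int_Diff)

lemma QQ_step:
  assumes Q: "QQ m L K"
  shows "\<exists>L' K'. QQ (Suc m) L' K'"
proof -
  define M where "M = Suc m"
  have MC: "real M * C1 > 0" using C1_pos by (simp add: M_def)
  obtain G where G: "2 * real M * C1 * eta ^ L < eta ^ G" using real_arch_pow[OF eta_gt1] by blast
  obtain Kw Lw where W: "\<And>(J::nat set) (eps::nat \<Rightarrow> int) (ix::nat \<Rightarrow> nat). finite J \<Longrightarrow> J \<noteq> {} \<Longrightarrow> card J \<le> M \<Longrightarrow>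
     (\<forall>j\<in>J. eps j \<in> {-1,1} \<and> ix j > Kw \<and> ix j \<le> Min (ix ` J) + m * G) \<Longrightarrow>
     TT J eps ix \<noteq> 0 \<Longrightarrow> eta powr (real (Min (ix ` J)) - real Lw) \<le> \<bar>SS J eps ix\<bar>"
    using window[of M "m * G"] by blast
  obtain L0 where L0: "1 / (real M * C1) < eta ^ L0" using real_arch_pow[OF eta_gt1] by blast
  define L' where "L' = max (max Lw L) L0"
  define K' where "K' = max K Kw"
  have pwL: "eta powr (x - real L') \<le> eta powr (x - real L'')" if "L'' \<le> L'" for x L''
    using eta_gt1 that by (intro powr_mono) auto
  have "QQ M L' K'" unfolding QQ_def good_def
  proof (intro allI impI)
    fix J :: "nat set" and eps :: "nat \<Rightarrow> int" and ix :: "nat \<Rightarrow> nat"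
    assume fin: "finite J" and card: "card J \<le> M" and hyp: "\<forall>j\<in>J. eps j \<in> {-1,1} \<and> ix j > K'"
    show "(SS J eps ix = 0 \<and> TT J eps ix = 0) \<or> eta powr (real (Min (ix ` J)) - real L') \<le> \<bar>SS J eps ix\<bar>"
    proof (cases "J = {}")
      case True thus ?thesis by (simp add: SS_def TT_def)
    next
      case ne: False
      define n where "n = Min (ix ` J)"
      have nle: "\<forall>j\<in>J. n \<le> ix j" using fin n_def by auto
      have "n \<in> ix ` J" unfolding n_def using fin ne by (intro Min_in) auto
      then obtain j0 where j0: "j0 \<in> J" "ix j0 = n" by auto
      have ix1: "\<forall>j\<in>J. 1 \<le> ix j" using hyp by force
      obtain t where t: "t \<le> m" "\<forall>j\<in>J. \<not> (n + t * G < ix j \<and> ix j \<le> n + Suc t * G)"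
        using pigeon[where ix=ix, OF fin card[unfolded M_def] j0] by blast
      define X where "X = {j. ix j \<le> n + t * G}"
      define Jl where "Jl = J \<inter> X"
      define Jh where "Jh = J - X"
      have finl: "finite Jl" and finh: "finite Jh" using fin by (auto simp: Jl_def Jh_def)
      have Ssp: "SS J eps ix = SS Jl eps ix + SS Jh eps ix"
        unfolding Jl_def Jh_def by (rule SS_split[OF fin])
      have Tsp: "TT J eps ix = TT Jl eps ix + TT Jh eps ix"
        unfolding Jl_def Jh_def by (rule TT_split[OF fin])
      have j0l: "j0 \<in> Jl" using j0 by (simp add: Jl_def X_def)
      have hbig: "\<forall>j\<in>Jh. n + t * G + G < ix j" using t(2) by (force simp: Jh_def X_def)
      have cardh: "card Jh \<le> m"
      proof -
        have "Jh \<subset> J" using j0l j0 by (auto simp: Jh_def Jl_def)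
        hence "card Jh < card J" using fin by (simp add: psubset_card_mono)
        thus ?thesis using card by (simp add: M_def)
      qed
      have goodh: "good L K Jh eps ix" using Q finh cardh unfolding QQ_def by blast
      have hyph: "\<forall>j\<in>Jh. eps j \<in> {-1,1} \<and> ix j > K" using hyp by (auto simp: Jh_def K'_def)
      have Minl: "Min (ix ` Jl) = n"
        using finl j0l j0 nle by (intro Min_eqI) (auto simp: Jl_def)
      have nonh: "Jh \<noteq> {} \<Longrightarrow> n \<le> Min (ix ` Jh)"
        using finh nle by (auto simp: Jh_def)
      have hcases: "(SS Jh eps ix = 0 \<and> TT Jh eps ix = 0) \<or>
          (Jh \<noteq> {} \<and> eta powr (real (Min (ix ` Jh)) - real L) \<le> \<bar>SS Jh eps ix\<bar>)"
        using goodh hyph unfolding good_def by (cases "Jh = {}") (auto simp: SS_def TT_def)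
      show ?thesis
      proof (cases "TT Jl eps ix = 0")
        case True
        hence Sl: "SS Jl eps ix = 0" using alg[OF finl] ix1 by (auto simp: Jl_def)
        from hcases show ?thesis
        proof
          assume "SS Jh eps ix = 0 \<and> TT Jh eps ix = 0"
          thus ?thesis using Ssp Tsp Sl True by simp
        next
          assume h: "Jh \<noteq> {} \<and> eta powr (real (Min (ix ` Jh)) - real L) \<le> \<bar>SS Jh eps ix\<bar>"
          have "eta powr (real n - real L') \<le> eta powr (real n - real L)" by (rule pwL) (simp add: L'_def)
          also have "\<dots> \<le> eta powr (real (Min (ix ` Jh)) - real L)"
            using eta_gt1 nonh h by (intro powr_mono) auto
          finally show ?thesis using h Ssp Sl n_def by auto
        qed
      next
        case False
        have winl: "\<forall>j\<in>Jl. eps j \<in> {-1,1} \<and> ix j > Kw \<and> ix j \<le> Min (ix ` Jl) + m * G"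
        proof
          fix j assume j: "j \<in> Jl"
          have tG: "t * G \<le> m * G" using t(1) by simp
          have "ix j \<le> n + t * G" using j by (simp add: Jl_def X_def)
          hence "ix j \<le> Min (ix ` Jl) + m * G" using tG Minl by linarith
          thus "eps j \<in> {-1,1} \<and> ix j > Kw \<and> ix j \<le> Min (ix ` Jl) + m * G"
            using j hyp by (auto simp: Jl_def X_def K'_def)
        qed
        have cardl: "card Jl \<le> M" using card fin by (metis Jl_def Int_lower1 card_mono le_trans)
        have Wl: "eta powr (real n - real Lw) \<le> \<bar>SS Jl eps ix\<bar>"
          proof -
          have "Jl \<noteq> {}" using j0l by blast
          from W[OF finl this cardl winl False] show ?thesis using Minl by simp
        qed
        from hcases show ?thesis
        proof
          assume "SS Jh eps ix = 0 \<and> TT Jh eps ix = 0"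
          hence "SS J eps ix = SS Jl eps ix" using Ssp by simp
          moreover have "eta powr (real n - real L') \<le> eta powr (real n - real Lw)"
            by (rule pwL) (simp add: L'_def)
          ultimately show ?thesis using Wl n_def by auto
        next
          assume h: "Jh \<noteq> {} \<and> eta powr (real (Min (ix ` Jh)) - real L) \<le> \<bar>SS Jh eps ix\<bar>"
          define E where "E = eta ^ (n + t * G)"
          have Epos: "E > 0" using eta_gt1 by (simp add: E_def)
          have upl: "\<bar>SS Jl eps ix\<bar> \<le> real M * C1 * E"
          proof -
            have "\<bar>SS Jl eps ix\<bar> \<le> card Jl * C1 * eta ^ (n + t * G)"
              using hyp ix1 by (intro SS_bound[OF finl]) (auto simp: Jl_def X_def)
            also have "\<dots> \<le> real M * C1 * E" unfolding E_def
              using cardl C1_pos eta_gt1 by (intro mult_right_mono) auto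
            finally show ?thesis .
          qed
          have mh: "n + t * G + G \<le> Min (ix ` Jh)"
            using h hbig finh by (subst Min_ge_iff) (auto intro: less_imp_le)
          have lowh: "2 * real M * C1 * E \<le> \<bar>SS Jh eps ix\<bar>"
          proof -
            have "2 * real M * C1 * E = E * (2 * real M * C1 * eta ^ L) / eta ^ L"
              using eta_gt1 by simp
            also have "\<dots> \<le> E * eta ^ G / eta ^ L"
              using G Epos eta_gt1 by (intro divide_right_mono mult_left_mono) auto
            also have "\<dots> = eta ^ (n + t * G + G) / eta ^ L" by (simp add: E_def power_add)
            also have "\<dots> \<le> eta ^ Min (ix ` Jh) / eta ^ L"
              using eta_gt1 mh by (intro divide_right_mono power_increasing) auto
            also have "\<dots> = eta powr (real (Min (ix ` Jh)) - real L)"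
              using eta_gt1 by (simp add: powr_nat_diff)
            finally show ?thesis using h by linarith
          qed
          have "\<bar>SS J eps ix\<bar> \<ge> real M * C1 * E" using Ssp upl lowh by linarith
          moreover have "real M * C1 * eta ^ n \<le> real M * C1 * E"
            unfolding E_def using MC eta_gt1 by (intro mult_left_mono power_increasing) auto
          moreover have "eta powr (real n - real L0) \<le> real M * C1 * eta ^ n"
          proof -
            have "eta powr (real n - real L0) = eta ^ n / eta ^ L0" using eta_gt1 by (simp add: powr_nat_diff)
            also have "\<dots> \<le> eta ^ n * (real M * C1)"
            proof -
              have "1 / eta ^ L0 \<le> real M * C1" using L0 MC eta_gt1 by (simp add: field_simps)
              thus ?thesis using eta_gt1 by (simp add: divide_le_eq field_simps)
            qed
            finally show ?thesis by (simp add: mult_ac)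
          qed
          moreover have "eta powr (real n - real L') \<le> eta powr (real n - real L0)"
            by (rule pwL) (simp add: L'_def)
          ultimately have "eta powr (real n - real L') \<le> \<bar>SS J eps ix\<bar>" by linarith
          thus ?thesis using n_def by simp
        qed
      qed
    qed
  qed
  thus ?thesis unfolding M_def by blast
qed

lemma QQ_all: "\<exists>L K. QQ m L K"
proof (induction m)
  case 0 thus ?case using QQ0 by blast
next
  case (Suc m) thus ?case using QQ_step by blast
qed

end

theorem lemma6p4:
  fixes d :: nat and p :: "int poly"
    and lam c :: "nat \<Rightarrow> complex"
  assumes irred: "irreducible p"
    and deg: "degree p = d"
    and roots: "map_poly of_int p = smult (of_int (lead_coeff p)) (\<Prod>i=1..d. [:- lam i, 1:])"
    and real1: "Im (lam 1) = 0"
    and gt1: "Re (lam 1) > 1"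
    and dom: "\<forall>i\<in>{2..d}. cmod (lam i) < Re (lam 1)"
    and c1: "c 1 \<noteq> 0"
    and posint: "\<forall>n\<ge>1. \<exists>k::int. k > 0 \<and> lrs d c lam n = of_int k"
  shows "\<exists>L3 K3 :: nat \<Rightarrow> nat. mono L3 \<and> mono K3 \<and>
    (\<forall>m. \<forall>(eps :: nat \<Rightarrow> int) (ix :: nat \<Rightarrow> nat).
       (\<forall>j\<in>{1..m}. eps j \<in> {-1, 1} \<and> ix j > K3 m) \<longrightarrow>
       (((\<Sum>j=1..m. of_int (eps j) * Re (lrs d c lam (ix j))) = 0 \<and>
         (\<Sum>j=1..m. of_int (eps j) * Re (lam 1) ^ ix j) = 0)
        \<or> \<bar>\<Sum>j=1..m. of_int (eps j) * Re (lrs d c lam (ix j))\<bar>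
            \<ge> Re (lam 1) powr (real (Min (ix ` {1..m})) - real (L3 m))))"
proof -
  interpret lr d p lam c
    by unfold_locales (use irred roots real1 gt1 dom c1 posint in auto)
  obtain Lc Kc where QC: "\<forall>m. QQ m (Lc m) (Kc m)" using QQ_all by metis
  define L3 where "L3 m = (\<Sum>k\<le>m. Lc k)" for m
  define K3 where "K3 m = (\<Sum>k\<le>m. Kc k)" for m
  have mL: "mono L3" unfolding mono_def L3_def by (auto intro: sum_mono2)
  have mK: "mono K3" unfolding mono_def K3_def by (auto intro: sum_mono2)
  have Q3: "QQ m (L3 m) (K3 m)" for m
  proof -
    have "Lc m \<le> L3 m" unfolding L3_def by (rule member_le_sum) auto
    moreover have "Kc m \<le> K3 m" unfolding K3_def by (rule member_le_sum) auto
    ultimately show ?thesis using QC QQ_mono by blast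
  qed
  show ?thesis
  proof (intro exI conjI allI impI)
    show "mono L3" by (rule mL)
    show "mono K3" by (rule mK)
    fix m and eps :: "nat \<Rightarrow> int" and ix :: "nat \<Rightarrow> nat"
    assume h: "\<forall>j\<in>{1..m}. eps j \<in> {-1, 1} \<and> ix j > K3 m"
    have "good (L3 m) (K3 m) {1..m} eps ix" using Q3[of m] unfolding QQ_def by simp
    thus "((\<Sum>j=1..m. of_int (eps j) * Re (lrs d c lam (ix j))) = 0 \<and>
         (\<Sum>j=1..m. of_int (eps j) * Re (lam 1) ^ ix j) = 0)
        \<or> \<bar>\<Sum>j=1..m. of_int (eps j) * Re (lrs d c lam (ix j))\<bar>
            \<ge> Re (lam 1) powr (real (Min (ix ` {1..m})) - real (L3 m))"
      using h unfolding good_def SS_def TT_def A_def eta_def by blast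
  qed
qed

end
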